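(* Let $m\ge3$. If the singleton partition $\mathcal S$ is the unique minimizer of $\Delta$ over partitions of $\mathcal M$ with at least two cells, then $\Delta_T(\mathcal S)<\Delta(\mathcal S)$ for every $T\subset\mathcal M$ with $|T|=m-1$.
   Context: Let $\mathcal M=\{1,\dots,m\}$, and let $X_{\mathcal M}$ be jointly distributed finite-valued random variables, with $X_A=(X_i:i\in A)$. For a partition $\mathcal P$ of $\mathcal M$ with $|\mathcal P|\ge2$, $\Delta(\mathcal P)=\frac1{|\mathcal P|-1}[\sum_{A\in\mathcal P}H(X_A)-H(X_{\mathcal M})]$. $\mathcal S=\{\{1\},\dots,\{m\}\}$ is the singleton partition. For $T\subset\mathcal M$ with $|T|=m-1$, $\Delta_T(\mathcal S)=\frac1{m-2}\big[\sum_{i\in T}H(X_i)-H(X_T)\big]$. *)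

theory Defs
  imports "HOL-Probability.Probability" "HOL-Library.Disjoint_Sets"
begin

definition ent :: "'a pmf \<Rightarrow> ('a \<Rightarrow> 'c) \<Rightarrow> real" where
  "ent P f = (\<Sum>v \<in> f ` set_pmf P.
      - pmf (map_pmf f P) v * log 2 (pmf (map_pmf f P) v))"

definition H :: "'a pmf \<Rightarrow> (nat \<Rightarrow> 'a \<Rightarrow> 'b) \<Rightarrow> nat set \<Rightarrow> real" where
  "H P X A = ent P (\<lambda>\<omega>. restrict (\<lambda>i. X i \<omega>) A)"

definition Delta :: "'a pmf \<Rightarrow> (nat \<Rightarrow> 'a \<Rightarrow> 'b) \<Rightarrow> nat set \<Rightarrow> nat set set \<Rightarrow> real" where
  "Delta P X M \<P> = ((\<Sum>A\<in>\<P>. H P X A) - H P X M) / (real (card \<P>) - 1)"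

definition singletons :: "nat set \<Rightarrow> nat set set" where
  "singletons M = (\<lambda>i. {i}) ` M"

definition DeltaT :: "'a pmf \<Rightarrow> (nat \<Rightarrow> 'a \<Rightarrow> 'b) \<Rightarrow> nat \<Rightarrow> nat set \<Rightarrow> real" where
  "DeltaT P X m T = ((\<Sum>i\<in>T. H P X {i}) - H P X T) / (real m - 2)"

end

theory Submission
  imports Defs
begin

theorem lemma8:
  fixes P :: "'a pmf" and X :: "nat \<Rightarrow> 'a \<Rightarrow> 'b" and m :: nat
  assumes "m \<ge> 3"
    and "\<forall>i\<in>{1..m}. finite (X i ` set_pmf P)"
    and "\<forall>\<P>. partition_on {1..m} \<P> \<and> card \<P> \<ge> 2 \<and> \<P> \<noteq> singletons {1..m}
           \<longrightarrow> Delta P X {1..m} (singletons {1..m}) < Delta P X {1..m} \<P>"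
  shows "\<forall>T. T \<subseteq> {1..m} \<and> card T = m - 1
           \<longrightarrow> DeltaT P X m T < Delta P X {1..m} (singletons {1..m})"
proof (intro allI impI)
  fix T assume T: "T \<subseteq> {1..m} \<and> card T = m - 1"
  define M where "M = {1..m::nat}"
  have fT: "finite T" using T finite_subset by blast
  have "card (M - T) = 1" using T fT assms(1) by (simp add: M_def card_Diff_subset)
  then obtain j where j: "M - T = {j}" by (auto simp: card_Suc_eq)
  have jM: "j \<in> M" and jT: "j \<notin> T" using j by auto
  have MTj: "M = insert j T" using j T M_def by blast
  have cT: "card T \<ge> 2" using T assms(1) by simp
  have Tne: "T \<noteq> {j}" using jT by auto
  have Tnes: "T \<notin> singletons M" using cT by (auto simp: singletons_def)
  define Q where "Q = {T, {j}}"
  have part: "partition_on M Q"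
    unfolding partition_on_def Q_def disjoint_def using MTj cT jT by auto
  have cQ: "card Q = 2" using Tne by (simp add: Q_def)
  have Qns: "Q \<noteq> singletons M" using Tnes by (auto simp: Q_def)
  have hyp: "Delta P X M (singletons M) < Delta P X M Q"
    using assms(3) part cQ Qns unfolding M_def by auto
  have sumQ: "(\<Sum>A\<in>Q. H P X A) = H P X T + H P X {j}" using Tne by (simp add: Q_def)
  have cS: "card (singletons M) = m" unfolding singletons_def M_def
    by (simp add: card_image)
  have sumS: "(\<Sum>A\<in>singletons M. H P X A) = (\<Sum>i\<in>T. H P X {i}) + H P X {j}"
  proof -
    have "(\<Sum>A\<in>singletons M. H P X A) = (\<Sum>i\<in>M. H P X {i})"
      unfolding singletons_def by (simp add: sum.reindex)
    also have "\<dots> = (\<Sum>i\<in>T. H P X {i}) + H P X {j}" using MTj fT jT by simp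
    finally show ?thesis .
  qed
  define a where "a = (\<Sum>i\<in>T. H P X {i}) + H P X {j} - H P X M"
  define b where "b = H P X T + H P X {j} - H P X M"
  have m1: "real m - 1 > 0" "real m - 2 > 0" using assms(1) by auto
  have h1: "a / (real m - 1) < b"
    using hyp unfolding Delta_def sumQ sumS cQ cS a_def b_def by simp
  hence "a < (real m - 1) * b" using m1 by (simp add: field_simps)
  hence "(a - b) / (real m - 2) < a / (real m - 1)" using m1
    by (simp add: field_simps)
  thus "DeltaT P X m T < Delta P X {1..m} (singletons {1..m})"
    unfolding DeltaT_def Delta_def M_def[symmetric] sumS cS a_def b_def by simp
qed

end
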